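(* Let $\Gamma$ be a metric graph as described in the context, let $A\subset\Gamma$ be a closed set and let $f\colon A\to\mathbb{R}$ be bounded. Let $u^*_f$ be the convex envelope of $f$. Then $u^*_f$ is bounded on $\Gamma$ if and only if $A$ contains every terminal node of $\Gamma$. In this case, \[ \inf_A f\le u^*_f(x)\le \sup_A f\qquad\text{for all } x\in\Gamma. \]
   Context: $\Gamma$ is a metric graph: a finite, connected, simple graph with vertex set $\mathrm{V}$ and edge set $\mathrm{E}$ (each vertex has degree between $1$ and some finite bound), each edge $\mathrm{e}$ being identified with an interval $[0,\ell_{\mathrm{e}}]$ of positive length, endpoints identified with the two vertices of $\mathrm{e}$. $\Gamma$ is regarded as a connected compact metric space with the path distance $d(x,y)$ (length of a shortest path in $\Gamma$ from $x$ to $y$); it is assumed that for $x,y$ on the same edge, $d(x,y)=|x-y|$. For $x,y\in\Gamma$, $[x,y]$ denotes the minimal path between $x$ and $y$. The degree of a vertex is the number of edges incident to it; a vertex of degree $1$ is called terminal (exterior). A function $u\colon\Gamma\to\mathbb{R}$ is convex if for all $x,y\in\Gamma$ and all $z\in[x,y]$, $u(z)\le \frac{d(y,z)}{d(x,y)}u(x)+\frac{d(x,z)}{d(x,y)}u(y)$. The convex envelope of $f\colon A\to\mathbb{R}$ is $u^*_f(x)=\sup\{u(x): u\colon\Gamma\to\mathbb{R}\text{ convex},\ u\le f \text{ on } A\}$. *)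

theory Defs
  imports "HOL-Analysis.Analysis" "HOL-Library.Extended_Real"
begin

text \<open>Each (undirected) edge is stored once, as an ordered pair (a,b); the edge is
identified with the interval [0, l (a,b)], 0 corresponding to a and l (a,b) to b.\<close>

datatype 'v gpoint = Vtx 'v | Edg "'v \<times> 'v" real

definition metric_graph :: "'v set \<Rightarrow> ('v \<times> 'v) set \<Rightarrow> ('v \<times> 'v \<Rightarrow> real) \<Rightarrow> bool" where
  "metric_graph V E l \<longleftrightarrow> finite V \<and> E \<subseteq> V \<times> V
     \<and> (\<forall>(a,b)\<in>E. a \<noteq> b \<and> (b,a) \<notin> E)
     \<and> (\<forall>e\<in>E. l e > 0)"

definition adjacent :: "('v \<times> 'v) set \<Rightarrow> 'v \<Rightarrow> 'v \<Rightarrow> bool" where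
  "adjacent E a b \<longleftrightarrow> (a,b) \<in> E \<or> (b,a) \<in> E"

definition wlen :: "('v \<times> 'v) set \<Rightarrow> ('v \<times> 'v \<Rightarrow> real) \<Rightarrow> 'v \<Rightarrow> 'v \<Rightarrow> real" where
  "wlen E l a b = (if (a,b) \<in> E then l (a,b) else l (b,a))"

definition is_walk :: "'v set \<Rightarrow> ('v \<times> 'v) set \<Rightarrow> 'v list \<Rightarrow> bool" where
  "is_walk V E xs \<longleftrightarrow> xs \<noteq> [] \<and> set xs \<subseteq> V
     \<and> (\<forall>i. Suc i < length xs \<longrightarrow> adjacent E (xs ! i) (xs ! Suc i))"

definition walk_length :: "('v \<times> 'v) set \<Rightarrow> ('v \<times> 'v \<Rightarrow> real) \<Rightarrow> 'v list \<Rightarrow> real" where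
  "walk_length E l xs = (\<Sum>i<length xs - 1. wlen E l (xs ! i) (xs ! Suc i))"

definition graph_connected :: "'v set \<Rightarrow> ('v \<times> 'v) set \<Rightarrow> bool" where
  "graph_connected V E \<longleftrightarrow> (\<forall>a\<in>V. \<forall>b\<in>V. \<exists>xs. is_walk V E xs \<and> hd xs = a \<and> last xs = b)"

definition vdist :: "'v set \<Rightarrow> ('v \<times> 'v) set \<Rightarrow> ('v \<times> 'v \<Rightarrow> real) \<Rightarrow> 'v \<Rightarrow> 'v \<Rightarrow> real" where
  "vdist V E l a b = Inf {walk_length E l xs | xs. is_walk V E xs \<and> hd xs = a \<and> last xs = b}"

definition degree :: "('v \<times> 'v) set \<Rightarrow> 'v \<Rightarrow> nat" where
  "degree E v = card {e\<in>E. fst e = v \<or> snd e = v}"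

definition terminal :: "'v set \<Rightarrow> ('v \<times> 'v) set \<Rightarrow> 'v \<Rightarrow> bool" where
  "terminal V E v \<longleftrightarrow> v \<in> V \<and> degree E v = 1"

definition points :: "'v set \<Rightarrow> ('v \<times> 'v) set \<Rightarrow> ('v \<times> 'v \<Rightarrow> real) \<Rightarrow> 'v gpoint set" where
  "points V E l = Vtx ` V \<union> {Edg e t | e t. e \<in> E \<and> 0 < t \<and> t < l e}"

definition edge_pt :: "('v \<times> 'v \<Rightarrow> real) \<Rightarrow> 'v \<times> 'v \<Rightarrow> real \<Rightarrow> 'v gpoint" where
  "edge_pt l e t = (if t = 0 then Vtx (fst e) else if t = l e then Vtx (snd e) else Edg e t)"

fun ends :: "('v \<times> 'v \<Rightarrow> real) \<Rightarrow> 'v gpoint \<Rightarrow> ('v \<times> real) set" where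
  "ends l (Vtx v) = {(v, 0)}"
| "ends l (Edg e t) = {(fst e, t), (snd e, l e - t)}"

text \<open>Path distance on the metric graph: a shortest path either stays inside a common
edge, or leaves the edges of the two points through endpoints.\<close>
definition gdist :: "'v set \<Rightarrow> ('v \<times> 'v) set \<Rightarrow> ('v \<times> 'v \<Rightarrow> real) \<Rightarrow> 'v gpoint \<Rightarrow> 'v gpoint \<Rightarrow> real" where
  "gdist V E l p q =
     (let via = Min {r + vdist V E l u w + s | u r w s. (u, r) \<in> ends l p \<and> (w, s) \<in> ends l q}
      in (case (p, q) of
            (Edg e t, Edg e' s) \<Rightarrow> (if e = e' then min \<bar>t - s\<bar> via else via)
          | _ \<Rightarrow> via))"

definition on_geodesic :: "'v set \<Rightarrow> ('v \<times> 'v) set \<Rightarrow> ('v \<times> 'v \<Rightarrow> real) \<Rightarrow> 'v gpoint \<Rightarrow> 'v gpoint \<Rightarrow> 'v gpoint \<Rightarrow> bool" where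
  "on_geodesic V E l x y z \<longleftrightarrow> z \<in> points V E l \<and>
     gdist V E l x z + gdist V E l z y = gdist V E l x y"

definition graph_convex :: "'v set \<Rightarrow> ('v \<times> 'v) set \<Rightarrow> ('v \<times> 'v \<Rightarrow> real) \<Rightarrow> ('v gpoint \<Rightarrow> real) \<Rightarrow> bool" where
  "graph_convex V E l u \<longleftrightarrow>
     (\<forall>x\<in>points V E l. \<forall>y\<in>points V E l. \<forall>z. x \<noteq> y \<and> on_geodesic V E l x y z \<longrightarrow>
        u z \<le> gdist V E l y z / gdist V E l x y * u x + gdist V E l x z / gdist V E l x y * u y)"

definition graph_closed :: "'v set \<Rightarrow> ('v \<times> 'v) set \<Rightarrow> ('v \<times> 'v \<Rightarrow> real) \<Rightarrow> 'v gpoint set \<Rightarrow> bool" where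
  "graph_closed V E l A \<longleftrightarrow> A \<subseteq> points V E l \<and>
     (\<forall>x\<in>points V E l. (\<forall>\<epsilon>>0. \<exists>a\<in>A. gdist V E l x a < \<epsilon>) \<longrightarrow> x \<in> A)"

text \<open>Convex envelope, valued in the extended reals (it may be +\<infinity>).\<close>
definition convex_envelope :: "'v set \<Rightarrow> ('v \<times> 'v) set \<Rightarrow> ('v \<times> 'v \<Rightarrow> real) \<Rightarrow> 'v gpoint set
    \<Rightarrow> ('v gpoint \<Rightarrow> real) \<Rightarrow> 'v gpoint \<Rightarrow> ereal" where
  "convex_envelope V E l A f x =
     (SUP u \<in> {u. graph_convex V E l u \<and> (\<forall>a\<in>A. u a \<le> f a)}. ereal (u x))"

end

theory Submission
  imports Defs
begin


lemma is_walk_single[simp]: "is_walk V E [a] \<longleftrightarrow> a \<in> V"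
  by (auto simp: is_walk_def)

lemma is_walk_Nil[simp]: "\<not> is_walk V E []"
  by (auto simp: is_walk_def)

lemma is_walk_cons2[simp]:
  "is_walk V E (a # b # xs) \<longleftrightarrow> a \<in> V \<and> adjacent E a b \<and> is_walk V E (b # xs)"
proof
  assume h: "is_walk V E (a # b # xs)"
  have "adjacent E a b" using h unfolding is_walk_def by (metis One_nat_def length_Cons less_Suc_eq_0_disj nth_Cons_0 nth_Cons_Suc zero_less_Suc)
  moreover have "is_walk V E (b # xs)" using h unfolding is_walk_def
    by (metis Suc_less_eq insert_subset length_Cons list.simps(15) list.distinct(1) nth_Cons_Suc)
  ultimately show "a \<in> V \<and> adjacent E a b \<and> is_walk V E (b # xs)" using h by (auto simp: is_walk_def)
next
  assume h: "a \<in> V \<and> adjacent E a b \<and> is_walk V E (b # xs)"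
  show "is_walk V E (a # b # xs)" unfolding is_walk_def
  proof (intro conjI allI impI)
    fix i assume i: "Suc i < length (a # b # xs)"
    show "adjacent E ((a # b # xs) ! i) ((a # b # xs) ! Suc i)"
    proof (cases i)
      case 0 then show ?thesis using h by simp
    next
      case (Suc j) then show ?thesis using h i unfolding is_walk_def by auto
    qed
  qed (use h in \<open>auto simp: is_walk_def\<close>)
qed

lemma walk_length_single[simp]: "walk_length E l [a] = 0"
  by (simp add: walk_length_def)

lemma walk_length_cons2[simp]:
  "walk_length E l (a # b # xs) = wlen E l a b + walk_length E l (b # xs)"
  unfolding walk_length_def by (simp add: sum.lessThan_Suc_shift del: sum.lessThan_Suc)

lemma walk_append:
  "is_walk V E xs \<Longrightarrow> is_walk V E ys \<Longrightarrow> last xs = hd ys \<Longrightarrow>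
   is_walk V E (xs @ tl ys) \<and> walk_length E l (xs @ tl ys) = walk_length E l xs + walk_length E l ys"
proof (induction xs)
  case Nil then show ?case by simp
next
  case (Cons a xs)
  show ?case
  proof (cases xs)
    case Nil
    then have "[a] @ tl ys = ys" using Cons by (cases ys) auto
    then show ?thesis using Nil Cons.prems by simp
  next
    case (Cons b xs')
    then show ?thesis using Cons.IH Cons.prems by auto
  qed
qed

lemma walk_snoc:
  "is_walk V E (ys @ [b]) \<Longrightarrow> ys \<noteq> [] \<Longrightarrow>
   is_walk V E ys \<and> adjacent E (last ys) b \<and> b \<in> V \<and>
   walk_length E l (ys @ [b]) = walk_length E l ys + wlen E l (last ys) b"
proof (induction ys)
  case Nil then show ?case by simp
next
  case (Cons a ys)
  show ?case
  proof (cases ys)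
    case Nil
    then show ?thesis using Cons.prems by (auto simp: is_walk_def)
  next
    case (Cons c ys')
    then show ?thesis using Cons.IH Cons.prems by auto
  qed
qed

lemma wlen_sym:
  assumes "metric_graph V E l" "adjacent E a b"
  shows "wlen E l a b = wlen E l b a"
  using assms unfolding metric_graph_def adjacent_def wlen_def by fastforce

lemma adjacent_sym: "adjacent E a b \<longleftrightarrow> adjacent E b a"
  by (auto simp: adjacent_def)

lemma walk_rev:
  assumes mg: "metric_graph V E l"
  shows "is_walk V E xs \<Longrightarrow> is_walk V E (rev xs) \<and> walk_length E l (rev xs) = walk_length E l xs"
proof (induction xs)
  case Nil then show ?case by simp
next
  case (Cons a xs)
  show ?case
  proof (cases xs)
    case Nil then show ?thesis using Cons by simp
  next
    case (Cons b xs')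
    have w: "is_walk V E (b # xs')" "a \<in> V" "adjacent E a b" using Cons.prems Cons by auto
    have IH: "is_walk V E (rev (b # xs'))" "walk_length E l (rev (b # xs')) = walk_length E l (b # xs')"
      using Cons.IH Cons w by auto
    have bV: "b \<in> V" using w(1) by (auto simp: is_walk_def)
    have w2: "is_walk V E [b, a]" using w bV adjacent_sym by fastforce
    have "rev (a # xs) = rev (b # xs') @ tl [b, a]" using Cons by simp
    moreover have "last (rev (b # xs')) = hd [b, a]" by simp
    ultimately show ?thesis using walk_append[OF IH(1) w2, of l] IH(2) wlen_sym[OF mg w(3)] Cons
      by auto
  qed
qed



locale MG =
  fixes V :: "'v set" and E :: "('v \<times> 'v) set" and l :: "'v \<times> 'v \<Rightarrow> real"
  assumes mg: "metric_graph V E l"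
    and conn: "graph_connected V E"
    and deg: "\<forall>v\<in>V. degree E v \<ge> 1"
    and edge_isom: "\<forall>e\<in>E. \<forall>t\<in>{0..l e}. \<forall>s\<in>{0..l e}.
                      gdist V E l (edge_pt l e t) (edge_pt l e s) = \<bar>t - s\<bar>"
begin

lemma finV: "finite V" and EV: "E \<subseteq> V \<times> V" and lpos: "e \<in> E \<Longrightarrow> l e > 0"
  and E_irr: "(a,b) \<in> E \<Longrightarrow> a \<noteq> b" and E_asym: "(a,b) \<in> E \<Longrightarrow> (b,a) \<notin> E"
  using mg unfolding metric_graph_def by auto

lemma finE: "finite E"
  using finV EV finite_subset by blast

lemma adj_V: "adjacent E a b \<Longrightarrow> a \<in> V \<and> b \<in> V"
  using EV by (auto simp: adjacent_def)

lemma wlen_pos: "adjacent E a b \<Longrightarrow> wlen E l a b > 0"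
  using lpos by (auto simp: adjacent_def wlen_def)

lemma walk_length_nonneg: "is_walk V E xs \<Longrightarrow> walk_length E l xs \<ge> 0"
proof (induction xs)
  case Nil then show ?case by simp
next
  case (Cons a xs)
  show ?case
  proof (cases xs)
    case Nil then show ?thesis by simp
  next
    case (Cons b xs')
    then have "wlen E l a b > 0" "walk_length E l xs \<ge> 0" using Cons.prems Cons.IH wlen_pos by auto
    then show ?thesis using Cons by simp
  qed
qed

definition walks where "walks a b = {xs. is_walk V E xs \<and> hd xs = a \<and> last xs = b}"

lemma vdist_eq: "vdist V E l a b = Inf (walk_length E l ` walks a b)"
proof -
  have "{walk_length E l xs | xs. is_walk V E xs \<and> hd xs = a \<and> last xs = b} = walk_length E l ` walks a b"
    unfolding walks_def by blast
  then show ?thesis unfolding vdist_def by simp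
qed

lemma walks_ne: "a \<in> V \<Longrightarrow> b \<in> V \<Longrightarrow> walks a b \<noteq> {}"
  using conn unfolding graph_connected_def walks_def by blast

lemma bdd: "bdd_below (walk_length E l ` walks a b)"
  by (rule bdd_belowI[of _ 0]) (auto simp: walks_def walk_length_nonneg)

lemma vdist_le: "is_walk V E xs \<Longrightarrow> hd xs = a \<Longrightarrow> last xs = b \<Longrightarrow> vdist V E l a b \<le> walk_length E l xs"
  unfolding vdist_eq by (rule cInf_lower[OF _ bdd]) (auto simp: walks_def)

lemma vdist_ge: "a \<in> V \<Longrightarrow> b \<in> V \<Longrightarrow> (\<And>xs. is_walk V E xs \<Longrightarrow> hd xs = a \<Longrightarrow> last xs = b \<Longrightarrow> c \<le> walk_length E l xs)
   \<Longrightarrow> c \<le> vdist V E l a b"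
  unfolding vdist_eq using walks_ne[of a b] by (intro cInf_greatest) (auto simp: walks_def)

lemma vdist_nonneg: "a \<in> V \<Longrightarrow> b \<in> V \<Longrightarrow> vdist V E l a b \<ge> 0"
  by (rule vdist_ge) (auto simp: walk_length_nonneg)

lemma vdist_refl: "a \<in> V \<Longrightarrow> vdist V E l a a = 0"
  using vdist_le[of "[a]" a a] vdist_nonneg[of a a] by simp

lemma vdist_sym: "a \<in> V \<Longrightarrow> b \<in> V \<Longrightarrow> vdist V E l a b = vdist V E l b a"
proof -
  have *: "vdist V E l a b \<le> vdist V E l b a" if "a \<in> V" "b \<in> V" for a b
  proof (rule vdist_ge[OF that(2,1)])
    fix xs assume xs: "is_walk V E xs" "hd xs = b" "last xs = a"
    then have "vdist V E l a b \<le> walk_length E l (rev xs)"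
      using walk_rev[OF mg xs(1)] by (intro vdist_le) (auto simp: hd_rev last_rev)
    then show "vdist V E l a b \<le> walk_length E l xs" using walk_rev[OF mg xs(1)] by simp
  qed
  assume "a \<in> V" "b \<in> V" then show ?thesis using *[of a b] *[of b a] by simp
qed

lemma vdist_triangle:
  assumes "a \<in> V" "b \<in> V" "c \<in> V"
  shows "vdist V E l a c \<le> vdist V E l a b + vdist V E l b c"
proof -
  have "vdist V E l a c - walk_length E l ys \<le> vdist V E l a b"
    if ys: "is_walk V E ys" "hd ys = b" "last ys = c" for ys
  proof (rule vdist_ge[OF assms(1,2)])
    fix xs assume xs: "is_walk V E xs" "hd xs = a" "last xs = b"
    have "vdist V E l a c \<le> walk_length E l (xs @ tl ys)"
      using walk_append[OF xs(1) ys(1), of l] xs ys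
    proof (intro vdist_le)
      show "hd (xs @ tl ys) = a" using xs by (cases xs) auto
      show "last (xs @ tl ys) = c"
      proof (cases "tl ys = []")
        case True
        then have "ys = [hd ys]" using ys(1) by (cases ys) auto
        then show ?thesis using True xs ys by (metis append_Nil2 last_ConsL)
      next
        case False
        then show ?thesis using ys by (cases ys) auto
      qed
    qed auto
    then show "vdist V E l a c - walk_length E l ys \<le> walk_length E l xs"
      using walk_append[OF xs(1) ys(1), of l] xs ys by simp
  qed
  then have "vdist V E l a c - vdist V E l a b \<le> walk_length E l ys"
    if ys: "is_walk V E ys" "hd ys = b" "last ys = c" for ys
    using ys by fastforce
  then have "vdist V E l a c - vdist V E l a b \<le> vdist V E l b c"
    by (intro vdist_ge[OF assms(2,3)])
  then show ?thesis by linarith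
qed

end


context MG begin

lemma walk_length_cons2_ge: "is_walk V E (a # b # xs) \<Longrightarrow> walk_length E l (a # b # xs) \<ge> wlen E l a b"
  using walk_length_nonneg[of "b # xs"] by simp

lemma E_ne: "V \<noteq> {} \<Longrightarrow> E \<noteq> {}"
proof
  assume "V \<noteq> {}" "E = {}"
  then obtain v where "v \<in> V" by auto
  then have "degree E v \<ge> 1" using deg by auto
  then show False using \<open>E = {}\<close> by (simp add: degree_def)
qed

lemma wlen_ge_min: "adjacent E a b \<Longrightarrow> wlen E l a b \<ge> Min (l ` E)"
  using finE by (auto simp: adjacent_def wlen_def intro: Min_le)

lemma min_pos: "E \<noteq> {} \<Longrightarrow> Min (l ` E) > 0"
  using finE lpos by (subst Min_gr_iff) auto

lemma vdist_pos:
  assumes "a \<in> V" "b \<in> V" "a \<noteq> b"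
  shows "vdist V E l a b > 0"
proof -
  have ne: "E \<noteq> {}" using E_ne assms by auto
  have "Min (l ` E) \<le> vdist V E l a b"
  proof (rule vdist_ge[OF assms(1,2)])
    fix xs assume xs: "is_walk V E xs" "hd xs = a" "last xs = b"
    then obtain b' rest where "xs = a # b' # rest" using assms(3)
      by (cases xs; cases "tl xs") auto
    then show "Min (l ` E) \<le> walk_length E l xs"
      using xs walk_length_cons2_ge[of a b' rest] wlen_ge_min[of a b'] by fastforce
  qed
  then show ?thesis using min_pos[OF ne] by linarith
qed

definition gvia where
  "gvia p q = Min ((\<lambda>((u,r),(w,s)). r + vdist V E l u w + s) ` (ends l p \<times> ends l q))"

lemma finite_ends: "finite (ends l p)" by (cases p) auto
lemma ends_ne: "ends l p \<noteq> {}" by (cases p) auto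

lemma via_set: "{r + vdist V E l u w + s | u r w s. (u, r) \<in> ends l p \<and> (w, s) \<in> ends l q}
   = (\<lambda>((u,r),(w,s)). r + vdist V E l u w + s) ` (ends l p \<times> ends l q)"
  by force

lemma gdist_eq: "gdist V E l p q = (case (p, q) of
            (Edg e t, Edg e' s) \<Rightarrow> (if e = e' then min \<bar>t - s\<bar> (gvia p q) else gvia p q)
          | _ \<Rightarrow> gvia p q)"
  unfolding gdist_def Let_def via_set gvia_def by simp

lemma gdist_via: "\<not> (\<exists>e t s. p = Edg e t \<and> q = Edg e s) \<Longrightarrow> gdist V E l p q = gvia p q"
  unfolding gdist_eq by (cases p; cases q) auto

lemma gdist_le_via: "gdist V E l p q \<le> gvia p q"
  unfolding gdist_eq by (cases p; cases q) auto

lemma via_le: "(u,r) \<in> ends l p \<Longrightarrow> (w,s) \<in> ends l q \<Longrightarrow> gvia p q \<le> r + vdist V E l u w + s"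
  unfolding gvia_def
  by (rule Min_le) (auto simp: finite_ends intro!: image_eqI[where x="((u,r),(w,s))"])

lemma via_ex: "\<exists>u r w s. (u,r) \<in> ends l p \<and> (w,s) \<in> ends l q \<and> gvia p q = r + vdist V E l u w + s"
proof -
  have "gvia p q \<in> (\<lambda>((u,r),(w,s)). r + vdist V E l u w + s) ` (ends l p \<times> ends l q)"
    unfolding gvia_def by (rule Min_in) (auto simp: finite_ends ends_ne)
  then show ?thesis by force
qed

lemma via_ge: "(\<And>u r w s. (u,r) \<in> ends l p \<Longrightarrow> (w,s) \<in> ends l q \<Longrightarrow> c \<le> r + vdist V E l u w + s)
   \<Longrightarrow> c \<le> gvia p q"
  using via_ex[of p q] by metis

lemma ends_points: "p \<in> points V E l \<Longrightarrow> (u,r) \<in> ends l p \<Longrightarrow> u \<in> V \<and> r \<ge> 0"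
  unfolding points_def using EV by auto

lemma ends_Edg_pos: "Edg e t \<in> points V E l \<Longrightarrow> (u,r) \<in> ends l (Edg e t) \<Longrightarrow> r \<ge> min t (l e - t) \<and> min t (l e - t) > 0"
  unfolding points_def by auto

lemma gvia_sym_le: "p \<in> points V E l \<Longrightarrow> q \<in> points V E l \<Longrightarrow> gvia p q \<le> gvia q p"
proof -
  assume pq: "p \<in> points V E l" "q \<in> points V E l"
  obtain u r w s where h: "(u,r) \<in> ends l q" "(w,s) \<in> ends l p" "gvia q p = r + vdist V E l u w + s"
    using via_ex by blast
  have "gvia p q \<le> s + vdist V E l w u + r" using via_le[OF h(2) h(1)] .
  also have "\<dots> = gvia q p" using h vdist_sym ends_points pq by auto
  finally show ?thesis .
qed

lemma gvia_sym: "p \<in> points V E l \<Longrightarrow> q \<in> points V E l \<Longrightarrow> gvia p q = gvia q p"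
  using gvia_sym_le by (meson order_antisym)

lemma gdist_sym: "p \<in> points V E l \<Longrightarrow> q \<in> points V E l \<Longrightarrow> gdist V E l p q = gdist V E l q p"
  unfolding gdist_eq using gvia_sym[of p q] by (cases p; cases q) (auto simp: abs_minus_commute)

lemma gvia_nonneg: "p \<in> points V E l \<Longrightarrow> q \<in> points V E l \<Longrightarrow> gvia p q \<ge> 0"
  by (rule via_ge) (use ends_points vdist_nonneg in fastforce)

lemma gdist_nonneg: "p \<in> points V E l \<Longrightarrow> q \<in> points V E l \<Longrightarrow> gdist V E l p q \<ge> 0"
  unfolding gdist_eq using gvia_nonneg[of p q] by (cases p; cases q) auto

lemma gvia_pos: "p \<in> points V E l \<Longrightarrow> q \<in> points V E l \<Longrightarrow> p \<noteq> q \<Longrightarrow> gvia p q > 0"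
proof -
  assume pq: "p \<in> points V E l" "q \<in> points V E l" "p \<noteq> q"
  show ?thesis
  proof (cases "\<exists>a b. p = Vtx a \<and> q = Vtx b")
    case True
    then obtain a b where ab: "p = Vtx a" "q = Vtx b" by auto
    then have "a \<noteq> b" "a \<in> V" "b \<in> V" using pq unfolding points_def by auto
    then have "vdist V E l a b > 0" using vdist_pos by auto
    moreover have "gvia p q = vdist V E l a b"
      using via_ex[of p q] ab by auto
    ultimately show ?thesis by simp
  next
    case False
    then obtain c where c: "c > 0" "\<And>u r w s. (u,r) \<in> ends l p \<Longrightarrow> (w,s) \<in> ends l q \<Longrightarrow> c \<le> r + s"
    proof (cases p)
      case (Vtx a)
      then obtain e t where q: "q = Edg e t" using False by (cases q) auto
      show ?thesis
        apply (rule that[of "min t (l e - t)"])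
        using ends_Edg_pos[of e t] pq q ends_points[OF pq(1)] by fastforce+
    next
      case (Edg e t)
      show ?thesis
        apply (rule that[of "min t (l e - t)"])
        using ends_Edg_pos[of e t] pq Edg ends_points[OF pq(2)] by fastforce+
    qed
    have "c \<le> gvia p q"
    proof (rule via_ge)
      fix u r w s assume h: "(u,r) \<in> ends l p" "(w,s) \<in> ends l q"
      then have "vdist V E l u w \<ge> 0" using ends_points pq vdist_nonneg by blast
      then show "c \<le> r + vdist V E l u w + s" using c(2)[OF h] by linarith
    qed
    then show ?thesis using c by linarith
  qed
qed

lemma gdist_pos: "p \<in> points V E l \<Longrightarrow> q \<in> points V E l \<Longrightarrow> p \<noteq> q \<Longrightarrow> gdist V E l p q > 0"
  unfolding gdist_eq using gvia_pos[of p q] by (cases p; cases q) auto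

lemma gdist_refl: "p \<in> points V E l \<Longrightarrow> gdist V E l p p = 0"
proof (cases p)
  case (Vtx a)
  assume "p \<in> points V E l"
  then have "a \<in> V" using Vtx unfolding points_def by auto
  then show ?thesis using Vtx via_ex[of p p] vdist_refl unfolding gdist_eq by auto
next
  case (Edg e t)
  assume "p \<in> points V E l"
  then show ?thesis using Edg gvia_nonneg[of p p] unfolding gdist_eq by auto
qed

lemma gdist_triangle_vtx:
  assumes p: "p \<in> points V E l" and q: "q \<in> points V E l" and w: "w \<in> V"
  shows "gdist V E l p q \<le> gdist V E l p (Vtx w) + gdist V E l (Vtx w) q"
proof -
  obtain u r w1 s1 where h1: "(u,r) \<in> ends l p" "(w1,s1) \<in> ends l (Vtx w)" "gvia p (Vtx w) = r + vdist V E l u w1 + s1"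
    using via_ex by blast
  obtain u2 r2 w2 s2 where h2: "(u2,r2) \<in> ends l (Vtx w)" "(w2,s2) \<in> ends l q" "gvia (Vtx w) q = r2 + vdist V E l u2 w2 + s2"
    using via_ex by blast
  have e: "w1 = w" "s1 = 0" "u2 = w" "r2 = 0" using h1 h2 by auto
  have uV: "u \<in> V" and w2V: "w2 \<in> V" using ends_points p q h1 h2 by auto
  have "gdist V E l p q \<le> gvia p q" by (rule gdist_le_via)
  also have "\<dots> \<le> r + vdist V E l u w2 + s2" by (rule via_le[OF h1(1) h2(2)])
  also have "\<dots> \<le> r + vdist V E l u w + vdist V E l w w2 + s2" using vdist_triangle[OF uV w w2V] by simp
  also have "\<dots> = gdist V E l p (Vtx w) + gdist V E l (Vtx w) q"
    using h1 h2 e by (simp add: gdist_via)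
  finally show ?thesis .
qed

end


context MG begin

definition inc where "inc e v \<longleftrightarrow> e \<in> E \<and> (fst e = v \<or> snd e = v)"
definition oth where "oth e v = (if fst e = v then snd e else fst e)"
definition qp where "qp e v \<sigma> = (if fst e = v then edge_pt l e \<sigma> else edge_pt l e (l e - \<sigma>))"

lemma edge_pt_points: "e \<in> E \<Longrightarrow> t \<in> {0..l e} \<Longrightarrow> edge_pt l e t \<in> points V E l"
proof -
  assume h: "e \<in> E" "t \<in> {0..l e}"
  then have "fst e \<in> V" "snd e \<in> V" using EV by auto
  moreover have "0 < t \<Longrightarrow> t < l e \<Longrightarrow> Edg e t \<in> {Edg e t |e t. e \<in> E \<and> 0 < t \<and> t < l e}"
    using h by blast
  ultimately show ?thesis using h unfolding edge_pt_def points_def by auto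
qed

lemma inc_V: "inc e v \<Longrightarrow> v \<in> V \<and> oth e v \<in> V"
  using EV unfolding inc_def oth_def by (cases e) auto

lemma qp_points: "inc e v \<Longrightarrow> \<sigma> \<in> {0..l e} \<Longrightarrow> qp e v \<sigma> \<in> points V E l"
  unfolding qp_def inc_def by (auto intro!: edge_pt_points)

lemma qp_dist: "inc e v \<Longrightarrow> \<sigma> \<in> {0..l e} \<Longrightarrow> \<sigma>' \<in> {0..l e} \<Longrightarrow>
    gdist V E l (qp e v \<sigma>) (qp e v \<sigma>') = \<bar>\<sigma> - \<sigma>'\<bar>"
  unfolding qp_def inc_def using edge_isom by auto

lemma qp_0: "inc e v \<Longrightarrow> qp e v 0 = Vtx v"
  unfolding qp_def inc_def edge_pt_def using lpos[of e] by auto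

lemma qp_end: "inc e v \<Longrightarrow> qp e v (l e) = Vtx (oth e v)"
  unfolding qp_def inc_def edge_pt_def oth_def using lpos[of e] E_irr[of "fst e" "snd e"] by auto

lemma qp_int: "inc e v \<Longrightarrow> 0 < \<sigma> \<Longrightarrow> \<sigma> < l e \<Longrightarrow>
   (\<exists>t. qp e v \<sigma> = Edg e t) \<and> ends l (qp e v \<sigma>) = {(v, \<sigma>), (oth e v, l e - \<sigma>)}"
  unfolding qp_def inc_def edge_pt_def oth_def using E_irr[of "fst e" "snd e"] by auto

lemma qp_conv:
  assumes u: "graph_convex V E l u" and e: "inc e v"
    and s: "0 \<le> \<sigma>1" "\<sigma>1 \<le> \<sigma>2" "\<sigma>2 \<le> \<sigma>3" "\<sigma>1 < \<sigma>3" "\<sigma>3 \<le> l e"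
  shows "u (qp e v \<sigma>2) \<le> (\<sigma>3 - \<sigma>2) / (\<sigma>3 - \<sigma>1) * u (qp e v \<sigma>1) + (\<sigma>2 - \<sigma>1) / (\<sigma>3 - \<sigma>1) * u (qp e v \<sigma>3)"
proof -
  let ?x = "qp e v \<sigma>1" and ?y = "qp e v \<sigma>3" and ?z = "qp e v \<sigma>2"
  have P: "?x \<in> points V E l" "?y \<in> points V E l" "?z \<in> points V E l"
    using qp_points[OF e] s by auto
  have d: "gdist V E l ?x ?y = \<sigma>3 - \<sigma>1" "gdist V E l ?y ?z = \<sigma>3 - \<sigma>2" "gdist V E l ?x ?z = \<sigma>2 - \<sigma>1"
    "gdist V E l ?z ?y = \<sigma>3 - \<sigma>2"
    using qp_dist[OF e] s by auto
  have ne: "?x \<noteq> ?y" using d(1) gdist_refl[OF P(1)] s by auto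
  have og: "on_geodesic V E l ?x ?y ?z" unfolding on_geodesic_def using P d by auto
  show ?thesis using u P ne og unfolding graph_convex_def d[symmetric] by blast
qed

lemma two_edges:
  assumes "v \<in> V" "\<not> terminal V E v" "inc e v"
  obtains e' where "inc e' v" "e' \<noteq> e"
proof -
  let ?S = "{e\<in>E. fst e = v \<or> snd e = v}"
  have "card ?S \<ge> 2" using assms deg unfolding terminal_def degree_def by force
  moreover have "finite ?S" using finE by auto
  moreover have "e \<in> ?S" using assms(3) unfolding inc_def by auto
  ultimately obtain e' where "e' \<in> ?S" "e' \<noteq> e"
    by (metis (no_types, lifting) card_le_Suc0_iff_eq numeral_le_one_iff semiring_norm(69) not_less_eq_eq numeral_2_eq_2)
  then show ?thesis using that unfolding inc_def by auto
qed

lemma qp_two: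
  assumes e: "inc e v" and e': "inc e' v" and ne: "e \<noteq> e'"
    and d: "0 < \<delta>" "\<delta> \<le> l e / 2" "\<delta> \<le> l e' / 2"
  shows "gdist V E l (qp e v \<delta>) (qp e' v \<delta>) = 2 * \<delta>"
proof -
  have le: "\<delta> < l e" "\<delta> < l e'" using d by auto
  obtain t t' where tt: "qp e v \<delta> = Edg e t" "qp e' v \<delta> = Edg e' t'"
    using qp_int[OF e d(1) le(1)] qp_int[OF e' d(1) le(2)] by auto
  have en: "ends l (qp e v \<delta>) = {(v, \<delta>), (oth e v, l e - \<delta>)}" "ends l (qp e' v \<delta>) = {(v, \<delta>), (oth e' v, l e' - \<delta>)}"
    using qp_int[OF e d(1) le(1)] qp_int[OF e' d(1) le(2)] by auto
  have V: "v \<in> V" "oth e v \<in> V" "oth e' v \<in> V" using inc_V e e' by auto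
  have g: "gdist V E l (qp e v \<delta>) (qp e' v \<delta>) = gvia (qp e v \<delta>) (qp e' v \<delta>)"
    using tt ne by (intro gdist_via) auto
  have "gvia (qp e v \<delta>) (qp e' v \<delta>) \<le> \<delta> + vdist V E l v v + \<delta>"
    by (rule via_le) (auto simp: en)
  moreover have "2 * \<delta> \<le> gvia (qp e v \<delta>) (qp e' v \<delta>)"
  proof (rule via_ge)
    fix u r w s assume h: "(u, r) \<in> ends l (qp e v \<delta>)" "(w, s) \<in> ends l (qp e' v \<delta>)"
    then have "u \<in> V" "w \<in> V" "r \<ge> \<delta>" "s \<ge> \<delta>" using V en d by auto
    then show "2 * \<delta> \<le> r + vdist V E l u w + s" using vdist_nonneg[of u w] by linarith
  qed
  ultimately show ?thesis using g vdist_refl[OF V(1)] by linarith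
qed

end


lemma conv_le: "(a::real) \<le> m \<Longrightarrow> b \<le> m \<Longrightarrow> 0 \<le> c1 \<Longrightarrow> 0 \<le> c2 \<Longrightarrow> c1 + c2 = 1 \<Longrightarrow> c1 * a + c2 * b \<le> m"
proof -
  assume h: "a \<le> m" "b \<le> m" "0 \<le> c1" "0 \<le> c2" "c1 + c2 = 1"
  have "c1 * a \<le> c1 * m" "c2 * b \<le> c2 * m" using h by (auto intro: mult_left_mono)
  then have "c1 * a + c2 * b \<le> (c1 + c2) * m" by (simp add: distrib_right)
  then show ?thesis using h by simp
qed

context MG begin

lemma edg_qp: "Edg e t \<in> points V E l \<Longrightarrow> inc e (fst e) \<and> qp e (fst e) t = Edg e t \<and> 0 < t \<and> t < l e"
  unfolding points_def inc_def qp_def edge_pt_def by auto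

lemma adj_inc: "adjacent E a b \<Longrightarrow> \<exists>e. inc e a \<and> oth e a = b"
  unfolding adjacent_def inc_def oth_def using E_irr by force

lemma vertex_max:
  assumes u: "graph_convex V E l u" and p: "p \<in> points V E l"
  shows "u p \<le> Max ((\<lambda>a. u (Vtx a)) ` V)"
proof (cases p)
  case (Vtx a)
  then have "a \<in> V" using p unfolding points_def by auto
  then show ?thesis using Vtx finV by (auto intro: Max_ge)
next
  case (Edg e t)
  let ?m = "Max ((\<lambda>a. u (Vtx a)) ` V)"
  have h: "inc e (fst e)" "qp e (fst e) t = Edg e t" "0 < t" "t < l e" using edg_qp p Edg by auto
  have "u (qp e (fst e) t) \<le> (l e - t) / (l e - 0) * u (qp e (fst e) 0) + (t - 0) / (l e - 0) * u (qp e (fst e) (l e))"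
    using h by (intro qp_conv[OF u h(1)]) auto
  also have "\<dots> = (l e - t) / l e * u (Vtx (fst e)) + t / l e * u (Vtx (oth e (fst e)))"
    using qp_0[OF h(1)] qp_end[OF h(1)] by simp
  also have "\<dots> \<le> ?m"
  proof (rule conv_le)
    show "u (Vtx (fst e)) \<le> ?m" "u (Vtx (oth e (fst e))) \<le> ?m"
      using inc_V[OF h(1)] finV by (auto intro: Max_ge)
    show "(l e - t) / l e + t / l e = 1" using h by (simp add: field_simps)
  qed (use h in auto)
  finally show ?thesis using h Edg by simp
qed

lemma spread:
  assumes u: "graph_convex V E l u" and ub: "\<forall>p\<in>points V E l. u p \<le> m"
    and v: "v \<in> V" "u (Vtx v) = m" "\<not> terminal V E v" and e: "inc e v"
    and s: "0 < \<sigma>" "\<sigma> \<le> l e"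
  shows "u (qp e v \<sigma>) = m"
proof -
  obtain e' where e': "inc e' v" "e' \<noteq> e" using two_edges[OF v(1) v(3) e] by blast
  have le: "l e > 0" "l e' > 0" using e e' lpos unfolding inc_def by auto
  define \<delta>0 where "\<delta>0 = min (l e) (l e') / 2"
  have d0: "\<delta>0 > 0" "\<delta>0 \<le> l e / 2" "\<delta>0 \<le> l e' / 2" using le unfolding \<delta>0_def by auto
  have A: "u (qp e v \<delta>) = m" if d: "0 < \<delta>" "\<delta> \<le> \<delta>0" for \<delta>
  proof -
    let ?x = "qp e v \<delta>" and ?y = "qp e' v \<delta>" and ?z = "Vtx v"
    have P: "?x \<in> points V E l" "?y \<in> points V E l" "?z \<in> points V E l"
      using qp_points[OF e] qp_points[OF e'(1)] d d0 v unfolding points_def by auto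
    have dxy: "gdist V E l ?x ?y = 2 * \<delta>" using qp_two[OF e e'(1)] e'(2) d d0 by auto
    have dxz: "gdist V E l ?x ?z = \<delta>" using qp_dist[OF e, of \<delta> 0] qp_0[OF e] d d0 by auto
    have dzy: "gdist V E l ?z ?y = \<delta>" using qp_dist[OF e'(1), of 0 \<delta>] qp_0[OF e'(1)] d d0 by auto
    have dyz: "gdist V E l ?y ?z = \<delta>" using qp_dist[OF e'(1), of \<delta> 0] qp_0[OF e'(1)] d d0 by auto
    have ne: "?x \<noteq> ?y" using dxy gdist_refl[OF P(1)] d by auto
    have og: "on_geodesic V E l ?x ?y ?z" unfolding on_geodesic_def using P dxy dxz dzy by auto
    have "u ?z \<le> gdist V E l ?y ?z / gdist V E l ?x ?y * u ?x + gdist V E l ?x ?z / gdist V E l ?x ?y * u ?y"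
      using u P ne og unfolding graph_convex_def by blast
    then have "m \<le> u ?x / 2 + u ?y / 2" using dxy dxz dyz d v by simp
    moreover have "u ?x \<le> m" "u ?y \<le> m" using ub P by auto
    ultimately show ?thesis by linarith
  qed
  define \<delta> where "\<delta> = min \<delta>0 (\<sigma> / 2)"
  have d: "0 < \<delta>" "\<delta> \<le> \<delta>0" "\<delta> < \<sigma>" using d0 s unfolding \<delta>_def by auto
  have "u (qp e v \<delta>) \<le> (\<sigma> - \<delta>) / (\<sigma> - 0) * u (qp e v 0) + (\<delta> - 0) / (\<sigma> - 0) * u (qp e v \<sigma>)"
    using d s by (intro qp_conv[OF u e]) auto
  then have "m \<le> (\<sigma> - \<delta>) / \<sigma> * m + \<delta> / \<sigma> * u (qp e v \<sigma>)"
    using A[OF d(1,2)] qp_0[OF e] v by simp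
  moreover have "(\<sigma> - \<delta>) / \<sigma> * m + \<delta> / \<sigma> * u (qp e v \<sigma>) = m + \<delta> / \<sigma> * (u (qp e v \<sigma>) - m)"
    using s by (simp add: field_simps)
  ultimately have "0 \<le> \<delta> / \<sigma> * (u (qp e v \<sigma>) - m)" by linarith
  moreover have "\<delta> / \<sigma> > 0" using d s by simp
  ultimately have "0 \<le> u (qp e v \<sigma>) - m" using zero_le_mult_iff by (metis not_less)
  then have "m \<le> u (qp e v \<sigma>)" by simp
  moreover have "u (qp e v \<sigma>) \<le> m" using ub qp_points[OF e] s by auto
  ultimately show ?thesis by simp
qed

lemma upper_bound:
  assumes u: "graph_convex V E l u" and uA: "\<forall>a\<in>A. u a \<le> f a" and S: "\<forall>a\<in>A. f a \<le> S"
    and trm: "\<forall>v. terminal V E v \<longrightarrow> Vtx v \<in> A" and Ap: "A \<subseteq> points V E l" and Ane: "A \<noteq> {}"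
    and x: "x \<in> points V E l"
  shows "u x \<le> S"
proof -
  have Vne: "V \<noteq> {}"
  proof
    assume "V = {}"
    then have "E = {}" using EV by auto
    then have "points V E l = {}" using \<open>V = {}\<close> unfolding points_def by auto
    then show False using Ap Ane by auto
  qed
  define m where "m = Max ((\<lambda>a. u (Vtx a)) ` V)"
  have ub: "\<forall>p\<in>points V E l. u p \<le> m" using vertex_max[OF u] unfolding m_def by auto
  have "m \<le> S"
  proof (rule ccontr)
    assume "\<not> m \<le> S"
    then have mS: "S < m" by simp
    have notA: "Vtx a \<notin> A" if "u (Vtx a) = m" for a
    proof
      assume "Vtx a \<in> A"
      then have "u (Vtx a) \<le> f (Vtx a)" "f (Vtx a) \<le> S" using uA S by auto
      then show False using that mS by linarith
    qed
    have notT: "\<not> terminal V E a" if "u (Vtx a) = m" for a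
      using notA[OF that] trm by auto
    have sp: "u (qp e a \<sigma>) = m" if "a \<in> V" "u (Vtx a) = m" "inc e a" "0 < \<sigma>" "\<sigma> \<le> l e" for a e \<sigma>
      using spread[OF u ub that(1,2) notT[OF that(2)] that(3-5)] .
    have "m \<in> (\<lambda>a. u (Vtx a)) ` V" unfolding m_def by (rule Max_in) (use finV Vne in auto)
    then obtain v0 where v0: "v0 \<in> V" "u (Vtx v0) = m" by auto
    have walkm: "is_walk V E xs \<Longrightarrow> u (Vtx (hd xs)) = m \<Longrightarrow> u (Vtx (last xs)) = m" for xs
    proof (induction xs)
      case Nil then show ?case by simp
    next
      case (Cons a xs)
      show ?case
      proof (cases xs)
        case Nil then show ?thesis using Cons.prems by simp
      next
        case (Cons b xs')
        have h: "a \<in> V" "adjacent E a b" "is_walk V E (b # xs')" "u (Vtx a) = m"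
          using Cons.prems Cons by auto
        obtain e where e: "inc e a" "oth e a = b" using adj_inc[OF h(2)] by blast
        have lp: "0 < l e" using lpos e(1) unfolding inc_def by auto
        have "u (qp e a (l e)) = m" using sp[OF h(1) h(4) e(1) lp order_refl] .
        then have ub: "u (Vtx b) = m" using qp_end[OF e(1)] e by simp
        have "is_walk V E xs" "u (Vtx (hd xs)) = m" using h(3) ub Cons by auto
        then have "u (Vtx (last xs)) = m" by (rule Cons.IH)
        then show ?thesis using Cons by simp
      qed
    qed
    have allV: "u (Vtx b) = m" if bV: "b \<in> V" for b
    proof -
      have "\<forall>a\<in>V. \<forall>b\<in>V. \<exists>xs. is_walk V E xs \<and> hd xs = a \<and> last xs = b"
        using conn unfolding graph_connected_def .
      then obtain xs where "is_walk V E xs" "hd xs = v0" "last xs = b"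
        using v0(1) bV by meson
      then show ?thesis using walkm v0 by auto
    qed
    have allP: "u p = m" if p: "p \<in> points V E l" for p
    proof (cases p)
      case (Vtx a) then show ?thesis using allV p unfolding points_def by auto
    next
      case (Edg e t)
      then have h: "inc e (fst e)" "qp e (fst e) t = Edg e t" "0 < t" "t < l e" using edg_qp p by auto
      have fV: "fst e \<in> V" using inc_V[OF h(1)] by auto
      have "u (qp e (fst e) t) = m" using sp[OF fV allV[OF fV] h(1) h(3)] h(4) by simp
      then show ?thesis using h(2) Edg by simp
    qed
    obtain a where "a \<in> A" using Ane by auto
    then have "a \<in> points V E l" "u a \<le> f a" "f a \<le> S" using Ap uA S by auto
    then show False using allP[of a] mS by linarith
  qed
  then show ?thesis using ub x by auto
qed

end


lemma real_R1:
  fixes a s r A :: real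
  assumes "0 \<le> a" "a \<le> s" "s < r" "r \<le> A"
  shows "r - s \<le> (A - s) / (A - a) * max 0 (r - a)"
proof -
  have pos: "A - a > 0" using assms by linarith
  have m: "max 0 (r - a) = r - a" using assms by simp
  have "(r - s) * (A - a) \<le> (A - s) * (r - a)"
  proof -
    have "(A - s) * (r - a) - (r - s) * (A - a) = (A - r) * (s - a)" by (simp add: algebra_simps)
    moreover have "(A - r) * (s - a) \<ge> 0" using assms by simp
    ultimately show ?thesis by linarith
  qed
  then show ?thesis unfolding m using pos by (simp add: field_simps)
qed

lemma real_R2:
  fixes a b s r :: real
  assumes "a \<noteq> b" "\<bar>a - s\<bar> + \<bar>s - b\<bar> = \<bar>a - b\<bar>"
  shows "r - s \<le> \<bar>b - s\<bar> / \<bar>a - b\<bar> * max 0 (r - a) + \<bar>a - s\<bar> / \<bar>a - b\<bar> * max 0 (r - b)"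
proof -
  have key: "r - s \<le> (b' - s) / (b' - a') * max 0 (r - a') + (s - a') / (b' - a') * max 0 (r - b')"
    if h: "a' < b'" "a' \<le> s" "s \<le> b'" for a' b'
  proof -
    have num: "(b' - s) * (r - a') + (s - a') * (r - b') = (r - s) * (b' - a')"
      by (simp add: algebra_simps)
    have "(b' - s) / (b' - a') * (r - a') + (s - a') / (b' - a') * (r - b')
        = ((b' - s) * (r - a') + (s - a') * (r - b')) / (b' - a')"
      by (simp add: add_divide_distrib)
    also have "\<dots> = r - s" unfolding num using h by simp
    finally have "(b' - s) / (b' - a') * (r - a') + (s - a') / (b' - a') * (r - b') = r - s" .
    moreover have "(b' - s) / (b' - a') * (r - a') \<le> (b' - s) / (b' - a') * max 0 (r - a')"
      using h by (intro mult_left_mono) auto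
    moreover have "(s - a') / (b' - a') * (r - b') \<le> (s - a') / (b' - a') * max 0 (r - b')"
      using h by (intro mult_left_mono) auto
    ultimately show ?thesis by linarith
  qed
  show ?thesis
  proof (cases "a < b")
    case True
    then have "a \<le> s" "s \<le> b" using assms by (auto simp: abs_if split: if_splits)
    then show ?thesis using key[of a b] True by (simp add: abs_if)
  next
    case False
    then have ba: "b < a" using assms by auto
    then have "b \<le> s" "s \<le> a" using assms by (auto simp: abs_if split: if_splits)
    then show ?thesis using key[of b a] ba by (simp add: abs_if add.commute)
  qed
qed

context MG begin

lemma conv_affine:
  assumes phi: "graph_convex V E l \<phi>" and K: "K \<ge> 0"
  shows "graph_convex V E l (\<lambda>p. c + K * \<phi> p)"
  unfolding graph_convex_def
proof (intro ballI allI impI)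
  fix x y z assume x: "x \<in> points V E l" and y: "y \<in> points V E l"
    and h: "x \<noteq> y \<and> on_geodesic V E l x y z"
  let ?D = "gdist V E l x y"
  have z: "z \<in> points V E l" and og: "gdist V E l x z + gdist V E l z y = ?D"
    using h unfolding on_geodesic_def by auto
  have D: "?D > 0" using gdist_pos x y h by auto
  have s: "gdist V E l y z / ?D + gdist V E l x z / ?D = 1"
    using og gdist_sym[OF z y] D by (simp add: field_simps)
  have c: "\<phi> z \<le> gdist V E l y z / ?D * \<phi> x + gdist V E l x z / ?D * \<phi> y"
    using phi x y h unfolding graph_convex_def by blast
  have "c + K * \<phi> z \<le> c + K * (gdist V E l y z / ?D * \<phi> x + gdist V E l x z / ?D * \<phi> y)"
    using c K by (simp add: mult_left_mono)
  also have "\<dots> = c - (gdist V E l y z / ?D + gdist V E l x z / ?D) * c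
       + (gdist V E l y z / ?D * (c + K * \<phi> x) + gdist V E l x z / ?D * (c + K * \<phi> y))"
  proof -
    have "\<And>Y X. c + K * (Y * \<phi> x + X * \<phi> y) = c - (Y + X) * c + (Y * (c + K * \<phi> x) + X * (c + K * \<phi> y))"
      by (simp add: algebra_simps)
    then show ?thesis by blast
  qed
  also have "\<dots> = gdist V E l y z / ?D * (c + K * \<phi> x) + gdist V E l x z / ?D * (c + K * \<phi> y)"
    using s by simp
  finally show "c + K * \<phi> z \<le> gdist V E l y z / ?D * (c + K * \<phi> x) + gdist V E l x z / ?D * (c + K * \<phi> y)" .
qed

lemma const_convex: "graph_convex V E l (\<lambda>p. c)"
proof -
  have "graph_convex V E l (\<lambda>p. 0)" unfolding graph_convex_def by simp
  from conv_affine[OF this, of 0 c] show ?thesis by simp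
qed

end


locale MGT = MG +
  fixes v
  assumes trm: "terminal V E v"
begin

lemma vV: "v \<in> V" using trm unfolding terminal_def by auto

lemma inc_ex1: "\<exists>!e. inc e v"
proof -
  have "card {e\<in>E. fst e = v \<or> snd e = v} = 1" using trm unfolding terminal_def degree_def by auto
  then obtain e where "{e\<in>E. fst e = v \<or> snd e = v} = {e}" by (rule card_1_singletonE)
  then show ?thesis unfolding inc_def by (metis (mono_tags, lifting) mem_Collect_eq singletonD singletonI)
qed

definition e0 where "e0 = (THE e. inc e v)"
definition w where "w = oth e0 v"
definition L where "L = l e0"

lemma inc_e0: "inc e0 v" unfolding e0_def using inc_ex1 by (rule theI')
lemma inc_uniq: "inc e v \<Longrightarrow> e = e0" using inc_ex1 inc_e0 by blast
lemma Lpos: "L > 0" using inc_e0 lpos unfolding L_def inc_def by auto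
lemma wV: "w \<in> V" using inc_V[OF inc_e0] unfolding w_def by auto
lemma w_ne: "w \<noteq> v" using inc_e0 E_irr unfolding w_def oth_def inc_def by (cases e0) auto

lemma adj_to_v: "adjacent E x v \<Longrightarrow> x = w"
proof -
  assume "adjacent E x v"
  then have "inc (x, v) v \<or> inc (v, x) v" unfolding adjacent_def inc_def by auto
  then have "(x, v) = e0 \<or> (v, x) = e0" using inc_uniq by auto
  moreover have "x \<noteq> v" using \<open>adjacent E x v\<close> E_irr unfolding adjacent_def by auto
  ultimately show "x = w" unfolding w_def oth_def by (cases e0) auto
qed

lemma adj_wv: "adjacent E w v"
  using inc_e0 unfolding w_def oth_def inc_def adjacent_def by (cases e0) auto

lemma wlen_wv: "wlen E l w v = L"
  using inc_e0 E_asym unfolding w_def oth_def inc_def wlen_def L_def by (cases e0) auto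

lemma vdist_term:
  assumes u: "u \<in> V" "u \<noteq> v"
  shows "vdist V E l u v = vdist V E l u w + L"
proof (rule antisym)
  have "vdist V E l w v \<le> walk_length E l [w, v]"
    by (rule vdist_le) (use wV vV adj_wv in auto)
  then have "vdist V E l w v \<le> L" using wlen_wv by simp
  then show "vdist V E l u v \<le> vdist V E l u w + L"
    using vdist_triangle[OF u(1) wV vV] by linarith
next
  show "vdist V E l u w + L \<le> vdist V E l u v"
  proof (rule vdist_ge[OF u(1) vV])
    fix xs assume xs: "is_walk V E xs" "hd xs = u" "last xs = v"
    have "xs \<noteq> []" using xs by auto
    then have xs_eq: "xs = butlast xs @ [v]" using xs(3) by (metis append_butlast_last_id)
    have bn: "butlast xs \<noteq> []"
    proof
      assume "butlast xs = []"
      then have "xs = [v]" using xs_eq by simp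
      then show False using xs u by simp
    qed
    have ws: "is_walk V E (butlast xs)" "adjacent E (last (butlast xs)) v"
      "walk_length E l xs = walk_length E l (butlast xs) + wlen E l (last (butlast xs)) v"
      using walk_snoc[of V E "butlast xs" v l] xs_eq xs(1) bn by auto
    have lw: "last (butlast xs) = w" using adj_to_v ws(2) by simp
    have "hd (butlast xs) = u" using xs(2) bn xs_eq by (metis hd_append2)
    then have "vdist V E l u w \<le> walk_length E l (butlast xs)"
      using vdist_le[OF ws(1)] lw by simp
    then show "vdist V E l u w + L \<le> walk_length E l xs" using ws(3) lw wlen_wv by simp
  qed
qed

definition out where "out p \<longleftrightarrow> p \<in> points V E l \<and> (\<forall>\<sigma>\<in>{0..L}. p \<noteq> qp e0 v \<sigma>)"

lemma classify: "p \<in> points V E l \<Longrightarrow> out p \<or> (\<exists>\<sigma>\<in>{0..L}. p = qp e0 v \<sigma>)"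
  unfolding out_def by auto

lemma out_not_edg: "out p \<Longrightarrow> p \<noteq> Edg e0 t"
proof
  assume o: "out p" and pe: "p = Edg e0 t"
  then have t: "0 < t" "t < L" using o unfolding out_def points_def L_def by auto
  show False
  proof (cases "fst e0 = v")
    case True
    then have "qp e0 v t = Edg e0 t" using t unfolding qp_def edge_pt_def L_def by auto
    moreover have "t \<in> {0..L}" using t by auto
    ultimately show False using o pe unfolding out_def by metis
  next
    case False
    then have "qp e0 v (L - t) = Edg e0 t" using t unfolding qp_def edge_pt_def L_def by auto
    moreover have "L - t \<in> {0..L}" using t by auto
    ultimately show False using o pe unfolding out_def by metis
  qed
qed

lemma out_ends: "out p \<Longrightarrow> (x, r) \<in> ends l p \<Longrightarrow> x \<noteq> v"
proof (cases p)
  case (Vtx a)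
  assume o: "out p" and h: "(x, r) \<in> ends l p"
  then have "x = a" using Vtx by simp
  moreover have "p \<noteq> qp e0 v 0" using o Lpos unfolding out_def by auto
  ultimately show ?thesis using Vtx qp_0[OF inc_e0] by auto
next
  case (Edg e t)
  assume o: "out p" and h: "(x, r) \<in> ends l p"
  then have "e \<noteq> e0" using out_not_edg[OF o, of t] Edg by auto
  moreover have "e \<in> E" using o Edg unfolding out_def points_def by auto
  moreover have "x = fst e \<or> x = snd e" using h Edg by auto
  ultimately show ?thesis using inc_uniq[of e] unfolding inc_def by auto
qed

lemma qp_shape: "\<sigma> \<in> {0..L} \<Longrightarrow> (\<exists>a. qp e0 v \<sigma> = Vtx a) \<or> (\<exists>t. qp e0 v \<sigma> = Edg e0 t)"
  unfolding qp_def edge_pt_def by auto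

lemma ends_qp: "\<sigma> \<in> {0..L} \<Longrightarrow> ends l (qp e0 v \<sigma>) \<subseteq> {(v, \<sigma>), (w, L - \<sigma>)}"
proof -
  assume s: "\<sigma> \<in> {0..L}"
  show ?thesis
  proof (cases "\<sigma> = 0")
    case True then show ?thesis using qp_0[OF inc_e0] by simp
  next
    case False
    show ?thesis
    proof (cases "\<sigma> = L")
      case True then show ?thesis using qp_end[OF inc_e0] unfolding w_def L_def by simp
    next
      case False
      then show ?thesis using qp_int[OF inc_e0, of \<sigma>] s \<open>\<sigma> \<noteq> 0\<close> unfolding w_def L_def by auto
    qed
  qed
qed

lemma ends_qp_w: "0 < \<sigma> \<Longrightarrow> \<sigma> \<le> L \<Longrightarrow> (w, L - \<sigma>) \<in> ends l (qp e0 v \<sigma>)"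
proof -
  assume s: "0 < \<sigma>" "\<sigma> \<le> L"
  show ?thesis
  proof (cases "\<sigma> = L")
    case True then show ?thesis using qp_end[OF inc_e0] unfolding w_def L_def by simp
  next
    case False
    then show ?thesis using qp_int[OF inc_e0, of \<sigma>] s unfolding w_def L_def by auto
  qed
qed

lemma formula:
  assumes o: "out p" and s: "\<sigma> \<in> {0..L}"
  shows "gdist V E l p (qp e0 v \<sigma>) = gdist V E l p (Vtx w) + L - \<sigma>"
proof -
  have p: "p \<in> points V E l" using o unfolding out_def by auto
  have g1: "gdist V E l p (qp e0 v \<sigma>) = gvia p (qp e0 v \<sigma>)"
  proof (intro gdist_via notI)
    assume "\<exists>e t s. p = Edg e t \<and> qp e0 v \<sigma> = Edg e s"
    then obtain e t s' where es: "p = Edg e t" "qp e0 v \<sigma> = Edg e s'" by blast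
    then have "e = e0" using qp_shape[OF s] by auto
    then show False using es out_not_edg[OF o, of t] by simp
  qed
  have g2: "gdist V E l p (Vtx w) = gvia p (Vtx w)" by (intro gdist_via) auto
  obtain u0 r0 w1 s1 where h: "(u0, r0) \<in> ends l p" "(w1, s1) \<in> ends l (Vtx w)"
    "gvia p (Vtx w) = r0 + vdist V E l u0 w1 + s1"
    using via_ex by blast
  have hw: "w1 = w" "s1 = 0" using h(2) by auto
  have u0: "u0 \<in> V" "u0 \<noteq> v" using ends_points[OF p h(1)] out_ends[OF o h(1)] by auto
  have "gvia p (qp e0 v \<sigma>) \<le> gvia p (Vtx w) + L - \<sigma>"
  proof (cases "\<sigma> = 0")
    case True
    have "gvia p (qp e0 v \<sigma>) \<le> r0 + vdist V E l u0 v + 0"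
      using True qp_0[OF inc_e0] by (intro via_le[OF h(1)]) auto
    then show ?thesis using vdist_term[OF u0] h(3) hw True by simp
  next
    case False
    then have "gvia p (qp e0 v \<sigma>) \<le> r0 + vdist V E l u0 w + (L - \<sigma>)"
      using s ends_qp_w[of \<sigma>] by (intro via_le[OF h(1)]) auto
    then show ?thesis using h(3) hw by simp
  qed
  moreover have "gvia p (Vtx w) + L - \<sigma> \<le> gvia p (qp e0 v \<sigma>)"
  proof (rule via_ge)
    fix x r y s' assume hx: "(x, r) \<in> ends l p" and hy: "(y, s') \<in> ends l (qp e0 v \<sigma>)"
    have xV: "x \<in> V" "x \<noteq> v" using ends_points[OF p hx] out_ends[OF o hx] by auto
    have le: "gvia p (Vtx w) \<le> r + vdist V E l x w + 0" by (rule via_le[OF hx]) auto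
    have "(y, s') = (v, \<sigma>) \<or> (y, s') = (w, L - \<sigma>)" using ends_qp[OF s] hy by auto
    then show "gvia p (Vtx w) + L - \<sigma> \<le> r + vdist V E l x y + s'"
    proof
      assume "(y, s') = (v, \<sigma>)"
      then show ?thesis using vdist_term[OF xV] le s by auto
    next
      assume "(y, s') = (w, L - \<sigma>)"
      then show ?thesis using le by auto
    qed
  qed
  ultimately show ?thesis using g1 g2 by linarith
qed

lemma out_far: "out p \<Longrightarrow> gdist V E l (Vtx v) p \<ge> L"
proof -
  assume o: "out p"
  have p: "p \<in> points V E l" using o unfolding out_def by auto
  have vp: "Vtx v \<in> points V E l" "Vtx w \<in> points V E l" using vV wV unfolding points_def by auto
  have "gdist V E l p (qp e0 v 0) = gdist V E l p (Vtx w) + L" using formula[OF o] Lpos by simp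
  moreover have "gdist V E l p (Vtx w) \<ge> 0" using gdist_nonneg[OF p vp(2)] .
  ultimately show ?thesis using gdist_sym[OF p vp(1)] qp_0[OF inc_e0] by simp
qed

end


context MGT begin

lemma dv_qp: "\<sigma> \<in> {0..L} \<Longrightarrow> gdist V E l (Vtx v) (qp e0 v \<sigma>) = \<sigma>"
  using qp_dist[OF inc_e0, of 0 \<sigma>] qp_0[OF inc_e0] Lpos unfolding L_def by auto

lemma qpP: "\<sigma> \<in> {0..L} \<Longrightarrow> qp e0 v \<sigma> \<in> points V E l"
  using qp_points[OF inc_e0] unfolding L_def by auto

lemma qq: "a \<in> {0..L} \<Longrightarrow> b \<in> {0..L} \<Longrightarrow> gdist V E l (qp e0 v a) (qp e0 v b) = \<bar>a - b\<bar>"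
  using qp_dist[OF inc_e0] unfolding L_def by auto

lemma phi_convex:
  assumes r: "0 < r" "r \<le> L"
  shows "graph_convex V E l (\<lambda>p. max 0 (r - gdist V E l (Vtx v) p))"
  unfolding graph_convex_def
proof (intro ballI allI impI)
  let ?d = "gdist V E l"
  let ?phi = "\<lambda>p. max 0 (r - gdist V E l (Vtx v) p)"
  fix x y z assume x: "x \<in> points V E l" and y: "y \<in> points V E l"
    and h: "x \<noteq> y \<and> on_geodesic V E l x y z"
  have z: "z \<in> points V E l" and og: "?d x z + ?d z y = ?d x y"
    using h unfolding on_geodesic_def by auto
  show "?phi z \<le> ?d y z / ?d x y * ?phi x + ?d x z / ?d x y * ?phi y"
  proof (cases "?phi z = 0")
    case True
    have "0 \<le> ?d y z / ?d x y * ?phi x" "0 \<le> ?d x z / ?d x y * ?phi y"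
      using gdist_nonneg[OF y z] gdist_nonneg[OF x z] gdist_nonneg[OF x y] by auto
    then show ?thesis using True by linarith
  next
    case False
    have phi_out: "?phi p = 0" if "out p" for p using out_far[OF that] r by simp
    have phi_qp: "?phi (qp e0 v a) = max 0 (r - a)" if "a \<in> {0..L}" for a using dv_qp[OF that] by simp
    have "\<not> out z" using phi_out False by auto
    then obtain s where s: "s \<in> {0..L}" "z = qp e0 v s" using classify[OF z] by auto
    have sr: "s < r" using False phi_qp[OF s(1)] s(2) by auto
    have phiz: "?phi z = r - s" using phi_qp[OF s(1)] s(2) sr by simp
    have zP: "qp e0 v s \<in> points V E l" using qpP[OF s(1)] .
    show ?thesis
    proof (cases "out x")
      case ox: True
      have dxz: "?d x z = ?d x (Vtx w) + L - s" using formula[OF ox s(1)] s(2) by simp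
      show ?thesis
      proof (cases "out y")
        case oy: True
        have dzy: "?d z y = ?d y (Vtx w) + L - s" using formula[OF oy s(1)] s(2) gdist_sym[OF y z] by simp
        have wP: "Vtx w \<in> points V E l" using wV unfolding points_def by auto
        have "?d x y \<le> ?d x (Vtx w) + ?d (Vtx w) y" using gdist_triangle_vtx[OF x y wV] .
        then have "?d x y \<le> ?d x (Vtx w) + ?d y (Vtx w)" using gdist_sym[OF y wP] by simp
        then show ?thesis using og dxz dzy s(1) sr r by simp
      next
        case oy: False
        then obtain b where b: "b \<in> {0..L}" "y = qp e0 v b" using classify[OF y] by auto
        have dzy: "?d z y = \<bar>s - b\<bar>" using qq[OF s(1) b(1)] s(2) b(2) by simp
        have dxy: "?d x y = ?d x (Vtx w) + L - b" using formula[OF ox b(1)] b(2) by simp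
        have gx: "?d x (Vtx w) \<ge> 0" using gdist_nonneg[OF x] wV unfolding points_def by auto
        have bs: "b \<le> s" using og dxz dzy dxy by (auto simp: abs_if split: if_splits)
        have "r - s \<le> (?d x (Vtx w) + L - s) / (?d x (Vtx w) + L - b) * max 0 (r - b)"
          using real_R1[of b s r "?d x (Vtx w) + L"] b(1) bs sr r gx by auto
        then show ?thesis using phiz phi_out[OF ox] phi_qp[OF b(1)] b(2) dxz dxy by simp
      qed
    next
      case ox: False
      then obtain a where a: "a \<in> {0..L}" "x = qp e0 v a" using classify[OF x] by auto
      have dxz: "?d x z = \<bar>a - s\<bar>" using qq[OF a(1) s(1)] s(2) a(2) by simp
      show ?thesis
      proof (cases "out y")
        case oy: True
        have dzy: "?d z y = ?d y (Vtx w) + L - s" using formula[OF oy s(1)] s(2) gdist_sym[OF y z] by simp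
        have dyz: "?d y z = ?d y (Vtx w) + L - s" using formula[OF oy s(1)] s(2) by simp
        have dxy: "?d x y = ?d y (Vtx w) + L - a" using formula[OF oy a(1)] a(2) gdist_sym[OF x y] by simp
        have gy: "?d y (Vtx w) \<ge> 0" using gdist_nonneg[OF y] wV unfolding points_def by auto
        have as: "a \<le> s" using og dxz dzy dxy by (auto simp: abs_if split: if_splits)
        have "r - s \<le> (?d y (Vtx w) + L - s) / (?d y (Vtx w) + L - a) * max 0 (r - a)"
          using real_R1[of a s r "?d y (Vtx w) + L"] a(1) as sr r gy by auto
        then show ?thesis using phiz phi_out[OF oy] phi_qp[OF a(1)] a(2) dyz dxy by simp
      next
        case oy: False
        then obtain b where b: "b \<in> {0..L}" "y = qp e0 v b" using classify[OF y] by auto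
        have dzy: "?d z y = \<bar>s - b\<bar>" using qq[OF s(1) b(1)] s(2) b(2) by simp
        have dyz: "?d y z = \<bar>b - s\<bar>" using qq[OF b(1) s(1)] s(2) b(2) by simp
        have dxy: "?d x y = \<bar>a - b\<bar>" using qq[OF a(1) b(1)] a(2) b(2) by simp
        have ab: "a \<noteq> b" using h a(2) b(2) by auto
        have "r - s \<le> \<bar>b - s\<bar> / \<bar>a - b\<bar> * max 0 (r - a) + \<bar>a - s\<bar> / \<bar>a - b\<bar> * max 0 (r - b)"
          using real_R2[OF ab] og dxz dzy dxy by simp
        then show ?thesis using phiz phi_qp[OF a(1)] phi_qp[OF b(1)] a(2) b(2) dyz dxz dxy by simp
      qed
    qed
  qed
qed

end


context MGT begin

lemma unbounded:
  assumes cl: "graph_closed V E l A" and vA: "Vtx v \<notin> A" and cf: "\<forall>a\<in>A. c \<le> f a"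
  shows "\<exists>u. graph_convex V E l u \<and> (\<forall>a\<in>A. u a \<le> f a) \<and> u (Vtx v) \<ge> K"
proof -
  have vP: "Vtx v \<in> points V E l" using vV unfolding points_def by auto
  obtain \<epsilon> where eps: "\<epsilon> > 0" "\<forall>a\<in>A. gdist V E l (Vtx v) a \<ge> \<epsilon>"
    using cl vA vP unfolding graph_closed_def by (meson not_less)
  define r where "r = min \<epsilon> L"
  have r: "0 < r" "r \<le> L" "r \<le> \<epsilon>" using eps Lpos unfolding r_def by auto
  define K' where "K' = max 0 ((K - c) / r)"
  have K'0: "K' \<ge> 0" "K' \<ge> (K - c) / r" unfolding K'_def by auto
  have "(K - c) / r * r \<le> K' * r" using K'0(2) r(1) by (intro mult_right_mono) auto
  moreover have "(K - c) / r * r = K - c" using r(1) by simp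
  ultimately have K': "K' \<ge> 0" "K' * r \<ge> K - c" using K'0 by auto
  let ?phi = "\<lambda>p. max 0 (r - gdist V E l (Vtx v) p)"
  let ?u = "\<lambda>p. c + K' * ?phi p"
  have "graph_convex V E l ?u" using conv_affine[OF phi_convex[OF r(1,2)] K'(1)] .
  moreover have "\<forall>a\<in>A. ?u a \<le> f a"
  proof
    fix a assume "a \<in> A"
    then have "?phi a = 0" using eps r by force
    then show "?u a \<le> f a" using cf \<open>a \<in> A\<close> by simp
  qed
  moreover have "?u (Vtx v) \<ge> K" using gdist_refl[OF vP] r K' by simp
  ultimately show ?thesis by blast
qed

end

lemma ereal_abs_bound: "ereal c \<le> X \<Longrightarrow> X \<le> ereal S \<Longrightarrow> \<bar>c\<bar> + \<bar>S\<bar> \<le> M \<Longrightarrow> \<bar>X\<bar> \<le> ereal M"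
  by (cases X) auto

theorem theorem1p1:
  fixes V :: "'v set" and E :: "('v \<times> 'v) set" and l :: "'v \<times> 'v \<Rightarrow> real"
    and A :: "'v gpoint set" and f :: "'v gpoint \<Rightarrow> real"
  assumes mg: "metric_graph V E l"
    and conn: "graph_connected V E"
    and deg: "\<forall>v\<in>V. degree E v \<ge> 1"
    and edge_isom: "\<forall>e\<in>E. \<forall>t\<in>{0..l e}. \<forall>s\<in>{0..l e}.
                      gdist V E l (edge_pt l e t) (edge_pt l e s) = \<bar>t - s\<bar>"
    and closedA: "graph_closed V E l A"
    and nonempty: "A \<noteq> {}"
    and bdd: "\<exists>M. \<forall>a\<in>A. \<bar>f a\<bar> \<le> M"
  shows "((\<exists>M. \<forall>x\<in>points V E l. \<bar>convex_envelope V E l A f x\<bar> \<le> ereal M)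
           \<longleftrightarrow> (\<forall>v. terminal V E v \<longrightarrow> Vtx v \<in> A))
         \<and> ((\<forall>v. terminal V E v \<longrightarrow> Vtx v \<in> A) \<longrightarrow>
           (\<forall>x\<in>points V E l. ereal (Inf (f ` A)) \<le> convex_envelope V E l A f x
                          \<and> convex_envelope V E l A f x \<le> ereal (Sup (f ` A))))"
proof -
  obtain M0 where M0: "\<forall>a\<in>A. \<bar>f a\<bar> \<le> M0" using bdd by blast
  interpret MG V E l using mg conn deg edge_isom by unfold_locales
  define c where "c = Inf (f ` A)"
  define S where "S = Sup (f ` A)"
  have bb: "bdd_below (f ` A)" "bdd_above (f ` A)" using M0
    by (auto intro!: bdd_belowI[of _ "- M0"] bdd_aboveI[of _ M0] simp: abs_le_iff)
  have cf: "\<forall>a\<in>A. c \<le> f a" unfolding c_def using bb(1) by (auto intro: cInf_lower)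
  have fS: "\<forall>a\<in>A. f a \<le> S" unfolding S_def using bb(2) by (auto intro: cSup_upper)
  have Ap: "A \<subseteq> points V E l" using closedA unfolding graph_closed_def by auto
  let ?U = "{u. graph_convex V E l u \<and> (\<forall>a\<in>A. u a \<le> f a)}"
  have env: "convex_envelope V E l A f x = (SUP u \<in> ?U. ereal (u x))" for x
    unfolding convex_envelope_def by simp
  have lower: "ereal c \<le> convex_envelope V E l A f x" for x
  proof -
    have "(\<lambda>p. c) \<in> ?U" using const_convex cf by auto
    then have "ereal ((\<lambda>p. c) x) \<le> (SUP u \<in> ?U. ereal (u x))" by (rule SUP_upper)
    then show ?thesis using env by simp
  qed
  have upper: "convex_envelope V E l A f x \<le> ereal S"
    if T: "\<forall>v. terminal V E v \<longrightarrow> Vtx v \<in> A" and x: "x \<in> points V E l" for x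
  proof -
    have "(SUP u \<in> ?U. ereal (u x)) \<le> ereal S"
    proof (rule SUP_least)
      fix u assume "u \<in> ?U"
      then show "ereal (u x) \<le> ereal S"
        using upper_bound[of u A f S x] fS T Ap nonempty x by auto
    qed
    then show ?thesis using env by simp
  qed
  have dir2: "\<forall>v. terminal V E v \<longrightarrow> Vtx v \<in> A"
    if B: "\<exists>M. \<forall>x\<in>points V E l. \<bar>convex_envelope V E l A f x\<bar> \<le> ereal M"
  proof (intro allI impI)
    fix v assume tv: "terminal V E v"
    show "Vtx v \<in> A"
    proof (rule ccontr)
      assume vA: "Vtx v \<notin> A"
      interpret MGT V E l v using tv by unfold_locales
      obtain M where M: "\<forall>x\<in>points V E l. \<bar>convex_envelope V E l A f x\<bar> \<le> ereal M" using B by blast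
      obtain u where u: "graph_convex V E l u" "\<forall>a\<in>A. u a \<le> f a" "u (Vtx v) \<ge> M + 1"
        using unbounded[OF closedA vA cf] by blast
      have "ereal (u (Vtx v)) \<le> (SUP u \<in> ?U. ereal (u (Vtx v)))" using u by (intro SUP_upper) auto
      then have ge: "ereal (M + 1) \<le> convex_envelope V E l A f (Vtx v)" using env u(3)
        by (metis ereal_less_eq(3) order_trans)
      have "Vtx v \<in> points V E l" using vV unfolding points_def by auto
      then have le: "\<bar>convex_envelope V E l A f (Vtx v)\<bar> \<le> ereal M" using M by auto
      show False using ge le by (cases "convex_envelope V E l A f (Vtx v)") auto
    qed
  qed
  have dir1: "\<exists>M. \<forall>x\<in>points V E l. \<bar>convex_envelope V E l A f x\<bar> \<le> ereal M"
    if T: "\<forall>v. terminal V E v \<longrightarrow> Vtx v \<in> A"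
    using ereal_abs_bound[OF lower upper[OF T] order_refl] by blast
  show ?thesis using dir1 dir2 lower upper unfolding c_def S_def by blast
qed


end
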